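(* Let $G$ be a finite, simple, connected graph of order $n$ and maximum degree $\Delta$. (1) If $n-2\le\Delta\le n-1$, then $\gamma_P(G)=1$. (2) If $n-4\le\Delta\le n-3$, then $1\le\gamma_P(G)\le 2$.
   Context: For $U\subseteq V(G)$, $cl(U)$ is obtained by coloring $U$ black and repeatedly applying: if a black vertex has exactly one white neighbor, that neighbor becomes black. $S$ is a power dominating set if $cl(N[S])=V(G)$; $\gamma_P(G)$ is the minimum size of a power dominating set. *)

theory Defs
  imports Main
begin

definition simple_graph :: "'a set \<Rightarrow> ('a \<Rightarrow> 'a \<Rightarrow> bool) \<Rightarrow> bool" where
  "simple_graph V E \<longleftrightarrow> finite V \<and> (\<forall>u v. E u v \<longrightarrow> u \<in> V \<and> v \<in> V)
     \<and> (\<forall>u v. E u v \<longrightarrow> E v u) \<and> (\<forall>v. \<not> E v v)"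

definition connected_graph :: "'a set \<Rightarrow> ('a \<Rightarrow> 'a \<Rightarrow> bool) \<Rightarrow> bool" where
  "connected_graph V E \<longleftrightarrow> V \<noteq> {} \<and> (\<forall>u\<in>V. \<forall>v\<in>V. (\<lambda>x y. E x y)\<^sup>*\<^sup>* u v)"

definition nbhd :: "'a set \<Rightarrow> ('a \<Rightarrow> 'a \<Rightarrow> bool) \<Rightarrow> 'a \<Rightarrow> 'a set" where
  "nbhd V E v = {u \<in> V. E v u}"

definition degree :: "'a set \<Rightarrow> ('a \<Rightarrow> 'a \<Rightarrow> bool) \<Rightarrow> 'a \<Rightarrow> nat" where
  "degree V E v = card (nbhd V E v)"

definition max_degree :: "'a set \<Rightarrow> ('a \<Rightarrow> 'a \<Rightarrow> bool) \<Rightarrow> nat" where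
  "max_degree V E = Max (degree V E ` V)"

definition closed_nbhd_set :: "'a set \<Rightarrow> ('a \<Rightarrow> 'a \<Rightarrow> bool) \<Rightarrow> 'a set \<Rightarrow> 'a set" where
  "closed_nbhd_set V E S = S \<union> (\<Union>v\<in>S. nbhd V E v)"

(* cl(U): colour U black, repeatedly: a black vertex with exactly one white
   neighbour forces that neighbour black. *)
inductive_set zf_closure :: "'a set \<Rightarrow> ('a \<Rightarrow> 'a \<Rightarrow> bool) \<Rightarrow> 'a set \<Rightarrow> 'a set"
  for V E U where
  base: "u \<in> U \<Longrightarrow> u \<in> zf_closure V E U"
| force: "\<lbrakk> v \<in> zf_closure V E U; w \<in> nbhd V E v;
            \<forall>x\<in>nbhd V E v. x \<noteq> w \<longrightarrow> x \<in> zf_closure V E U \<rbrakk> \<Longrightarrow> w \<in> zf_closure V E U"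

definition power_dominating_set :: "'a set \<Rightarrow> ('a \<Rightarrow> 'a \<Rightarrow> bool) \<Rightarrow> 'a set \<Rightarrow> bool" where
  "power_dominating_set V E S \<longleftrightarrow> S \<subseteq> V \<and> zf_closure V E (closed_nbhd_set V E S) = V"

definition power_domination_number :: "'a set \<Rightarrow> ('a \<Rightarrow> 'a \<Rightarrow> bool) \<Rightarrow> nat" where
  "power_domination_number V E = (LEAST k. \<exists>S. power_dominating_set V E S \<and> card S = k)"

end

theory Submission
  imports Defs
begin

lemma nb_exists:
  assumes sg: "simple_graph V E" and cg: "connected_graph V E"
    and r: "r \<in> V" and x: "x \<in> V" "x \<noteq> r"
  shows "\<exists>y\<in>V. E y r"
proof -
  have "(\<lambda>x y. E x y)\<^sup>*\<^sup>* x r" using cg r x unfolding connected_graph_def by blast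
  then show ?thesis
  proof (cases rule: rtranclp.cases)
    case rtrancl_refl then show ?thesis using x by simp
  next
    case (rtrancl_into_rtrancl b) then show ?thesis using sg unfolding simple_graph_def by blast
  qed
qed

lemma closure_sub:
  assumes sg: "simple_graph V E" and U: "U \<subseteq> V"
  shows "zf_closure V E U \<subseteq> V"
proof
  fix x assume "x \<in> zf_closure V E U"
  then show "x \<in> V"
  proof (induction rule: zf_closure.induct)
    case (base u) then show ?case using U by blast
  next
    case (force v w)
    have "w \<in> nbhd V E v" by fact
    then show ?case unfolding nbhd_def by blast
  qed
qed

lemma force_last:
  assumes sg: "simple_graph V E" and cg: "connected_graph V E"
    and C: "V - {r} \<subseteq> zf_closure V E U" and r: "r \<in> V" and x: "x \<in> V" "x \<noteq> r"
  shows "r \<in> zf_closure V E U"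
proof -
  obtain y where y: "y \<in> V" "E y r" using nb_exists[OF sg cg r x] by blast
  have "y \<noteq> r" using y sg unfolding simple_graph_def by blast
  then have yC: "y \<in> zf_closure V E U" using C y by blast
  have "r \<in> nbhd V E y" using y r by (simp add: nbhd_def)
  moreover have "\<forall>z\<in>nbhd V E y. z \<noteq> r \<longrightarrow> z \<in> zf_closure V E U"
    using C by (auto simp: nbhd_def)
  ultimately show ?thesis using zf_closure.force[OF yC] by blast
qed

lemma cns_sub:
  assumes "S \<subseteq> V" shows "closed_nbhd_set V E S \<subseteq> V"
  using assms by (auto simp: closed_nbhd_set_def nbhd_def)

lemma pds1:
  assumes sg: "simple_graph V E" and cg: "connected_graph V E"
    and S: "S \<subseteq> V" "S \<noteq> {}" and R: "V - closed_nbhd_set V E S \<subseteq> {r}"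
  shows "power_dominating_set V E S"
proof -
  let ?C = "zf_closure V E (closed_nbhd_set V E S)"
  have base: "closed_nbhd_set V E S \<subseteq> ?C" by (rule subsetI, rule zf_closure.base)
  have "V \<subseteq> ?C"
  proof (cases "r \<in> V - closed_nbhd_set V E S")
    case False then show ?thesis using R base by blast
  next
    case True
    obtain s where s: "s \<in> S" using S by blast
    have sN: "s \<in> closed_nbhd_set V E S" using s by (simp add: closed_nbhd_set_def)
    have rV: "r \<in> V" and rN: "r \<notin> closed_nbhd_set V E S" using True by simp_all
    have sV: "s \<in> V" using s S(1) by blast
    have sr: "s \<noteq> r" using sN rN by metis
    have "V - {r} \<subseteq> ?C" using R base by blast
    then have "r \<in> ?C" by (rule force_last[OF sg cg _ rV sV sr])
    then show ?thesis using R base by blast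
  qed
  moreover have "?C \<subseteq> V" using closure_sub[OF sg cns_sub[OF S(1)]] .
  ultimately have "?C = V" by (rule antisym[rotated])
  then show ?thesis using S(1) unfolding power_dominating_set_def by simp
qed

lemma cns_two: "closed_nbhd_set V E {v, a} = {v, a} \<union> nbhd V E v \<union> nbhd V E a"
  by (auto simp: closed_nbhd_set_def)

lemma key:
  assumes sg: "simple_graph V E" and cg: "connected_graph V E"
    and v: "v \<in> V" and W3: "card (V - closed_nbhd_set V E {v}) \<le> 3"
  shows "\<exists>S. power_dominating_set V E S \<and> card S \<le> 2
           \<and> (card (V - closed_nbhd_set V E {v}) \<le> 1 \<longrightarrow> card S = 1)"
proof -
  define W where "W = V - closed_nbhd_set V E {v}"
  have fin: "finite V" using sg by (simp add: simple_graph_def)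
  have finW: "finite W" using fin W_def by simp
  have Nv: "closed_nbhd_set V E {v} = insert v (nbhd V E v)" by (simp add: closed_nbhd_set_def)
  have vW: "v \<notin> W" using Nv W_def by auto
  have WV: "W \<subseteq> V" using W_def by auto
  have sym: "\<And>x y. E x y \<Longrightarrow> E y x" and irr: "\<And>x. \<not> E x x"
    and inV: "\<And>x y. E x y \<Longrightarrow> x \<in> V \<and> y \<in> V"
    using sg unfolding simple_graph_def by blast+
  have notadj: "\<And>w. w \<in> W \<Longrightarrow> \<not> E v w" using Nv W_def by (auto simp: nbhd_def)
  have cnsE: "\<And>x y. x \<in> V \<Longrightarrow> E y x \<Longrightarrow> x \<in> nbhd V E y" by (simp add: nbhd_def)
  have cW3: "card W \<le> 3" using W3 W_def by simp
  have "card W \<le> 1 \<or> card W = 2 \<or> card W = 3" using cW3 by linarith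
  then consider "card W \<le> 1" | "card W = 2" | "card W = 3" by blast
  then show ?thesis
  proof cases
    case 1
    have all: "\<forall>a\<in>W. \<forall>b\<in>W. a = b" using 1 card_le_Suc0_iff_eq[OF finW] by simp
    obtain r where "W \<subseteq> {r}"
    proof (cases "W = {}")
      case True then show ?thesis using that by blast
    next
      case False then obtain r where "r \<in> W" by blast
      then have "W \<subseteq> {r}" using all by blast
      then show ?thesis using that by blast
    qed
    then have "power_dominating_set V E {v}" using pds1[OF sg cg, of "{v}" r] v W_def by auto
    then show ?thesis using 1 W_def by (intro exI[of _ "{v}"]) auto
  next
    case 2
    then obtain a b where ab: "W = {a, b}" "a \<noteq> b" by (meson card_2_iff)
    have "V - closed_nbhd_set V E {v, a} \<subseteq> {b}"
      using ab W_def Nv unfolding cns_two by auto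
    then have "power_dominating_set V E {v, a}" using pds1[OF sg cg, of "{v,a}" b] v ab WV by auto
    then show ?thesis using 2 W_def by (intro exI[of _ "{v,a}"]) (auto simp: card_insert_if)
  next
    case 3
    then obtain a b c where abc: "W = {a, b, c}" "a \<noteq> b" "b \<noteq> c" "a \<noteq> c" by (meson card_3_iff)
    have abcV: "a \<in> V" "b \<in> V" "c \<in> V" using abc WV by auto
    have two: "card {x, y} \<le> 2" for x y :: 'a by (simp add: card_insert_if)
    have fin3: "\<not> card W \<le> 1" using 3 by simp
    have done2: "\<exists>S. power_dominating_set V E S \<and> card S \<le> 2
           \<and> (card (V - closed_nbhd_set V E {v}) \<le> 1 \<longrightarrow> card S = 1)"
      if "x \<in> V" "V - closed_nbhd_set V E {v, x} \<subseteq> {r}" for x r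
      using pds1[OF sg cg, of "{v,x}" r] that v two fin3 W_def by blast
    show ?thesis
    proof (cases "E a b \<or> E a c \<or> E b c")
      case True
      then show ?thesis
      proof (elim disjE)
        assume "E a b"
        then have "V - closed_nbhd_set V E {v, a} \<subseteq> {c}"
          using abc W_def Nv abcV unfolding cns_two by (auto simp: nbhd_def)
        then show ?thesis using done2 abcV by blast
      next
        assume "E a c"
        then have "V - closed_nbhd_set V E {v, a} \<subseteq> {b}"
          using abc W_def Nv abcV unfolding cns_two by (auto simp: nbhd_def)
        then show ?thesis using done2 abcV by blast
      next
        assume "E b c"
        then have "V - closed_nbhd_set V E {v, b} \<subseteq> {a}"
          using abc W_def Nv abcV unfolding cns_two by (auto simp: nbhd_def)
        then show ?thesis using done2 abcV by blast
      qed
    next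
      case False
      then have noe: "\<not> E a b" "\<not> E a c" "\<not> E b c" "\<not> E b a" "\<not> E c a" "\<not> E c b"
        using sym by blast+
      obtain u where u: "u \<in> V" "E u b" using nb_exists[OF sg cg abcV(2) v] vW abc by auto
      have uv: "u \<noteq> v" using u notadj abc by auto
      have ua: "u \<noteq> a" "u \<noteq> b" "u \<noteq> c" using u noe irr by auto
      have uN: "u \<in> nbhd V E v"
        using u uv ua abc W_def Nv by auto
      show ?thesis
      proof (cases "E u c")
        case True
        then have "V - closed_nbhd_set V E {v, u} \<subseteq> {a}"
          using abc W_def Nv abcV u unfolding cns_two by (auto simp: nbhd_def)
        then show ?thesis using done2 u by blast
      next
        case False
        let ?C = "zf_closure V E (closed_nbhd_set V E {v, a})"
        have base: "closed_nbhd_set V E {v, a} \<subseteq> ?C" by (rule subsetI, rule zf_closure.base)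
        have sub: "V - {b, c} \<subseteq> ?C"
          using base abc W_def Nv unfolding cns_two by auto
        have uC: "u \<in> ?C" using sub u ua by blast
        have "b \<in> ?C"
          apply (rule zf_closure.force[OF uC])
          using u abcV sub False by (auto simp: nbhd_def)
        then have "V - {c} \<subseteq> ?C" using sub by blast
        then have "c \<in> ?C" using force_last[OF sg cg _ abcV(3) v] vW abc by auto
        then have "V \<subseteq> ?C" using \<open>V - {c} \<subseteq> ?C\<close> by blast
        then have "power_dominating_set V E {v, a}"
          using closure_sub[OF sg cns_sub[of "{v,a}"]] v abcV unfolding power_dominating_set_def by blast
        then show ?thesis using two fin3 W_def by blast
      qed
    qed
  qed
qed

lemma pdn_ge1:
  assumes sg: "simple_graph V E" and cg: "connected_graph V E"
  shows "1 \<le> power_domination_number V E \<or> \<not> (\<exists>S. power_dominating_set V E S)"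
proof -
  have no0: "\<not> power_dominating_set V E S" if "card S = 0" for S
  proof
    assume p: "power_dominating_set V E S"
    have "finite S" using p sg finite_subset unfolding power_dominating_set_def simple_graph_def by blast
    then have "S = {}" using that by simp
    have "zf_closure V E {} = {}"
    proof -
      { fix x assume "x \<in> zf_closure V E {}" then have False
          by (induction rule: zf_closure.induct) auto }
      then show ?thesis by blast
    qed
    then show False using p \<open>S = {}\<close> cg
      unfolding power_dominating_set_def connected_graph_def closed_nbhd_set_def by simp
  qed
  show ?thesis
  proof (cases "\<exists>S. power_dominating_set V E S")
    case True
    then obtain S0 where "power_dominating_set V E S0" by blast
    then have "\<exists>S. power_dominating_set V E S \<and> card S = card S0" by blast
    then have "\<exists>S. power_dominating_set V E S \<and> card S = (LEAST k. \<exists>S. power_dominating_set V E S \<and> card S = k)"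
      by (rule LeastI)
    then obtain S where "power_dominating_set V E S" "card S = power_domination_number V E"
      unfolding power_domination_number_def by blast
    then have "power_domination_number V E \<noteq> 0" using no0 by metis
    then show ?thesis by simp
  qed simp
qed

lemma pdn_le:
  assumes "power_dominating_set V E S" "card S \<le> k"
  shows "power_domination_number V E \<le> k"
  unfolding power_domination_number_def using assms
  by (metis (mono_tags, lifting) Least_le le_trans)

theorem mainTheorem5:
  fixes V :: "'a set" and E :: "'a \<Rightarrow> 'a \<Rightarrow> bool"
  assumes "simple_graph V E" and "connected_graph V E"
  shows "(int (card V) - 2 \<le> int (max_degree V E) \<and> int (max_degree V E) \<le> int (card V) - 1
            \<longrightarrow> power_domination_number V E = 1)
       \<and> (int (card V) - 4 \<le> int (max_degree V E) \<and> int (max_degree V E) \<le> int (card V) - 3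
            \<longrightarrow> 1 \<le> power_domination_number V E \<and> power_domination_number V E \<le> 2)"
proof -
  have fin: "finite V" and ne: "V \<noteq> {}" using assms unfolding simple_graph_def connected_graph_def by auto
  obtain v where v: "v \<in> V" "degree V E v = max_degree V E"
    unfolding max_degree_def using fin ne
    by (metis (no_types, lifting) Max_in finite_imageI image_iff image_is_empty)
  have Nv: "closed_nbhd_set V E {v} = insert v (nbhd V E v)" by (simp add: closed_nbhd_set_def)
  have vn: "v \<notin> nbhd V E v" using assms(1) by (simp add: nbhd_def simple_graph_def)
  have nsub: "nbhd V E v \<subseteq> V" by (auto simp: nbhd_def)
  have "card (closed_nbhd_set V E {v}) = Suc (degree V E v)"
    using Nv vn fin finite_subset[OF nsub] by (simp add: degree_def)
  moreover have "card (V - closed_nbhd_set V E {v}) = card V - card (closed_nbhd_set V E {v})"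
    by (rule card_Diff_subset) (use fin nsub v Nv finite_subset in auto)
  moreover have "card (closed_nbhd_set V E {v}) \<le> card V"
    by (rule card_mono) (use fin nsub v Nv in auto)
  ultimately have cW: "int (card (V - closed_nbhd_set V E {v})) = int (card V) - 1 - int (max_degree V E)"
    using v by simp
  show ?thesis
  proof (intro conjI impI)
    assume h: "int (card V) - 2 \<le> int (max_degree V E) \<and> int (max_degree V E) \<le> int (card V) - 1"
    obtain S where S: "power_dominating_set V E S" "card S \<le> 2"
      "card (V - closed_nbhd_set V E {v}) \<le> 1 \<longrightarrow> card S = 1"
      using key[OF assms v(1)] cW h by fastforce
    have "power_domination_number V E \<le> 1" using pdn_le[OF S(1)] S(3) cW h by simp
    then show "power_domination_number V E = 1" using pdn_ge1[OF assms] S by fastforce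
  next
    assume h: "int (card V) - 4 \<le> int (max_degree V E) \<and> int (max_degree V E) \<le> int (card V) - 3"
    obtain S where S: "power_dominating_set V E S" "card S \<le> 2"
      using key[OF assms v(1)] cW h by fastforce
    show "1 \<le> power_domination_number V E" using pdn_ge1[OF assms] S by fastforce
    show "power_domination_number V E \<le> 2" using pdn_le[OF S(1) S(2)] .
  qed
qed

end
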